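(* Let $q > 5$ be a Sophie Germain prime with $z(2q+1) \mid \pi(q)$. Then $q \equiv 8 \pmod{15}$.
   Context: A Sophie Germain prime is a prime $q$ with $2q+1$ prime. $F_n$ denotes the $n$-th Fibonacci number ($F_0=0$, $F_1=1$). For a prime $p$, $z(p)$ is the least positive integer $k$ with $p \mid F_k$. $\pi(n)$ is the Pisano period, the least period of $(F_m \bmod n)_{m\ge0}$. *)

theory Defs
  imports "HOL-Number_Theory.Number_Theory"
begin

definition fib_rank :: "nat \<Rightarrow> nat" where
  "fib_rank p = (LEAST k. 0 < k \<and> p dvd fib k)"

definition pisano :: "nat \<Rightarrow> nat" where
  "pisano n = (LEAST k. 0 < k \<and> (\<forall>m. fib (m + k) mod n = fib m mod n))"

end

theory Submission
  imports Defs
begin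


definition S :: "nat \<Rightarrow> nat" where
  "S n = (\<Sum>k\<le>n. if odd k then (n choose k) * 5 ^ (k div 2) else 0)"

lemma fib_binom: "2 ^ n * fib n = 2 * S n"
proof -
  define s :: real where "s = sqrt 5"
  have s2: "s^2 = 5" unfolding s_def by simp
  have spos: "s \<noteq> 0" unfolding s_def by simp
  have sk: "s ^ k = 5 ^ (k div 2) * s" if "odd k" for k
  proof -
    have "k = 2 * (k div 2) + 1" using that by presburger
    then have "s ^ k = s ^ (2 * (k div 2) + 1)" by simp
    also have "\<dots> = (s^2) ^ (k div 2) * s" by (simp add: power_mult power_add)
    finally show ?thesis using s2 by simp
  qed
  have b1: "(s + 1) ^ n = (\<Sum>k\<le>n. of_nat (n choose k) * s ^ k)"
    using binomial_ring[of s 1 n] by simp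
  have b2: "(-s + 1) ^ n = (\<Sum>k\<le>n. of_nat (n choose k) * (-s) ^ k)"
    using binomial_ring[of "-s" 1 n] by simp
  have "(s + 1) ^ n - (-s + 1) ^ n = (\<Sum>k\<le>n. of_nat (n choose k) * (s ^ k - (-s) ^ k))"
    unfolding b1 b2 by (simp add: sum_subtractf algebra_simps)
  also have "\<dots> = (\<Sum>k\<le>n. 2 * s * (if odd k then of_nat (n choose k) * 5 ^ (k div 2) else 0))"
    by (intro sum.cong refl) (auto simp: sk)
  also have "\<dots> = 2 * s * real (S n)"
    by (simp add: S_def sum_distrib_left of_nat_sum if_distrib cong: if_cong)
  finally have eq: "(1 + s) ^ n - (1 - s) ^ n = 2 * s * real (S n)" by (simp add: add.commute)
  have cf: "real (fib n) = (((1 + s) / 2) ^ n - ((1 - s) / 2) ^ n) / s"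
    using fib_closed_form[of n] unfolding s_def by simp
  have "real (2 ^ n * fib n) * s = (1 + s) ^ n - (1 - s) ^ n"
    using spos by (simp add: cf power_divide field_simps)
  also have "\<dots> = real (2 * S n) * s" using eq by simp
  finally have "real (2 ^ n * fib n) = real (2 * S n)" using spos by simp
  then show ?thesis by (simp only: of_nat_eq_iff)
qed

lemma S_p:
  assumes p: "prime p" "odd p"
  shows "\<exists>M. S p = p * M + 5 ^ (p div 2)"
proof -
  let ?f = "\<lambda>k. if odd k then (p choose k) * 5 ^ (k div 2) else 0"
  have "S p = (\<Sum>k<p. ?f k) + ?f p"
    unfolding S_def by (simp add: lessThan_Suc_atMost[symmetric])
  moreover have "?f p = 5 ^ (p div 2)" using p by simp
  moreover have "p dvd (\<Sum>k<p. ?f k)"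
  proof (intro dvd_sum)
    fix k assume k: "k \<in> {..<p}"
    show "p dvd ?f k"
    proof (cases "k = 0")
      case False
      then have "p dvd (p choose k)" using k p by (intro dvd_choose_prime) auto
      then show ?thesis by simp
    qed simp
  qed
  ultimately show ?thesis by (auto elim!: dvdE)
qed

lemma S_p1:
  assumes p: "prime p" "odd p"
  shows "\<exists>M. S (p + 1) = p * M + (p + 1) + (p + 1) * 5 ^ (p div 2)"
proof -
  let ?f = "\<lambda>k. if odd k then ((p + 1) choose k) * 5 ^ (k div 2) else 0"
  have p3: "p \<ge> 3" using p prime_ge_2_nat[of p] by presburger
  have sub: "{1, p} \<subseteq> {..p+1}" by auto
  have "S (p + 1) = (\<Sum>k\<in>{..p+1} - {1,p}. ?f k) + (\<Sum>k\<in>{1,p}. ?f k)"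
    unfolding S_def by (rule sum.subset_diff[OF sub]) simp
  moreover have "(\<Sum>k\<in>{1,p}. ?f k) = (p + 1) + (p + 1) * 5 ^ (p div 2)"
  proof -
    have "(p + 1) choose p = p + 1" using binomial_symmetric[of p "p+1"] by simp
    then show ?thesis using p p3 by simp
  qed
  moreover have "p dvd (\<Sum>k\<in>{..p+1} - {1,p}. ?f k)"
  proof (intro dvd_sum)
    fix k assume k: "k \<in> {..p+1} - {1,p}"
    show "p dvd ?f k"
    proof (cases "odd k")
      case True
      then have k2: "k \<ge> 2" "k < p" using k p by (auto elim!: oddE)
      then obtain j where j: "k = Suc j" "j \<ge> 1" by (cases k) auto
      have "(p + 1) choose k = (p choose j) + (p choose k)"
        using j by simp
      moreover have "p dvd (p choose j)" using j k2 p by (intro dvd_choose_prime) auto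
      moreover have "p dvd (p choose k)" using j k2 p by (intro dvd_choose_prime) auto
      ultimately show ?thesis by simp
    qed simp
  qed
  ultimately show ?thesis by (auto elim!: dvdE)
qed



lemma fermat_int:
  assumes "prime p" "\<not> p dvd a"
  shows "int p dvd int a ^ (p - 1) - 1"
proof -
  have "[a ^ (p - 1) = 1] (mod p)" using fermat_theorem assms by blast
  then have "[int a ^ (p - 1) = 1] (mod int p)" using cong_int_iff[of "a^(p-1)" 1 p] by simp
  then show ?thesis by (simp add: cong_iff_dvd_diff dvd_diff_commute)
qed

lemma prime_dvd_2mult:
  assumes "prime p" "odd p" "int p dvd 2 * x"
  shows "int p dvd x"
proof -
  have "prime (int p)" using assms by simp
  moreover have "\<not> int p dvd 2"
  proof
    assume "int p dvd 2"
    then have "int p dvd int 2" by simp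
    then have "p dvd 2" by (simp only: int_dvd_int_iff)
    then have "p \<le> 2" by (rule dvd_imp_le) simp
    moreover have "p \<ge> 2" using assms prime_ge_2_nat by blast
    ultimately have "p = 2" by simp
    then show False using assms by simp
  qed
  ultimately show ?thesis using assms(3) prime_dvd_mult_iff by blast
qed

lemma fib_mod_p:
  assumes p: "prime p" "p > 5"
  defines "e \<equiv> (5::int) ^ (p div 2)"
  shows "int p dvd int (fib p) - e" "int p dvd 2 * int (fib (p + 1)) - 1 - e"
    "int p dvd e * e - 1"
proof -
  have odd: "odd p" using p prime_odd_nat[of p] by simp
  have pd: "p - 1 = 2 * (p div 2)" using odd by presburger
  have f2: "int p dvd 2 ^ (p - 1) - 1" 
  proof -
    have "\<not> p dvd 2"
    proof
      assume "p dvd 2"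
      then have "p \<le> 2" by (rule dvd_imp_le) simp
      then show False using p by simp
    qed
    then show ?thesis using fermat_int[of p 2] p by simp
  qed
  have f5: "int p dvd 5 ^ (p - 1) - 1" 
  proof -
    have "\<not> p dvd 5"
    proof
      assume "p dvd 5"
      then have "p \<le> 5" by (rule dvd_imp_le) simp
      then show False using p by simp
    qed
    then show ?thesis using fermat_int[of p 5] p by simp
  qed
  have "(5::int) ^ (p - 1) = e * e" unfolding e_def pd by (simp only: power_mult power_mult_distrib[symmetric]) (simp add: power2_eq_square power_mult_distrib)
  then show "int p dvd e * e - 1" using f5 by simp
  define t where "t = (2::int) ^ (p - 1) - 1"
  have p2: "(2::int) ^ p = 2 * t + 2" unfolding t_def using p by (cases p) auto
  have p3: "(2::int) ^ (p + 1) = 4 * t + 4" using p2 by simp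
  obtain M where M: "S p = p * M + 5 ^ (p div 2)" using S_p p odd by blast
  have "int (2 ^ p * fib p) = int (2 * S p)" using fib_binom by (simp only:)
  then have eq1: "2 ^ p * int (fib p) = 2 * (int p * int M + e)"
    using M unfolding e_def by simp
  have "2 * (int (fib p) - e) = int p * (2 * int M) - 2 * t * int (fib p)"
    using eq1 unfolding p2 by (simp add: algebra_simps)
  moreover have "int p dvd int p * (2 * int M) - 2 * t * int (fib p)"
    using f2 unfolding t_def[symmetric] by (intro dvd_diff) auto
  ultimately show "int p dvd int (fib p) - e" using prime_dvd_2mult p odd by metis
  obtain N where N: "S (p + 1) = p * N + (p + 1) + (p + 1) * 5 ^ (p div 2)" using S_p1 p odd by blast
  have "int (2 ^ (p + 1) * fib (p + 1)) = int (2 * S (p + 1))" using fib_binom by (simp only:)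
  then have eq2: "2 ^ (p + 1) * int (fib (p + 1)) = 2 * (int p * int N + (int p + 1) + (int p + 1) * e)"
    using N unfolding e_def by (simp add: algebra_simps)
  have "2 * (2 * int (fib (p + 1)) - 1 - e) = int p * (2 * int N + 2 + 2 * e) - 4 * t * int (fib (p + 1))"
    using eq2 unfolding p3 by (simp add: algebra_simps)
  moreover have "int p dvd int p * (2 * int N + 2 + 2 * e) - 4 * t * int (fib (p + 1))"
    using f2 unfolding t_def[symmetric] by (intro dvd_diff) auto
  ultimately show "int p dvd 2 * int (fib (p + 1)) - 1 - e" using prime_dvd_2mult p odd by metis
qed



lemma fib_rank_props:
  assumes "prime p" "n > 0" "p dvd fib n"
  shows "fib_rank p > 0" "p dvd fib (fib_rank p)"
proof -
  have "0 < fib_rank p \<and> p dvd fib (fib_rank p)"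
    unfolding fib_rank_def by (rule LeastI[of _ n]) (use assms in auto)
  then show "fib_rank p > 0" "p dvd fib (fib_rank p)" by auto
qed

lemma fib_rank_dvd:
  assumes "prime p" "n > 0" "p dvd fib n" "p dvd fib m"
  shows "fib_rank p dvd m"
proof -
  let ?z = "fib_rank p"
  have z: "?z > 0" "p dvd fib ?z" using fib_rank_props assms by blast+
  have "p dvd fib (gcd ?z m)" using z assms by (simp add: fib_gcd)
  moreover have g0: "gcd ?z m > 0" using z by simp
  ultimately have "?z \<le> gcd ?z m" unfolding fib_rank_def by (intro Least_le) simp
  moreover have "gcd ?z m \<le> ?z" using z by (simp add: gcd_le1_nat)
  ultimately have "gcd ?z m = ?z" by simp
  then show ?thesis by (metis gcd_dvd2)
qed

lemma period_mult:
  assumes "\<forall>m. fib (m + k) mod q = fib m mod q"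
  shows "fib (m + j * k) mod q = fib m mod q"
proof (induction j)
  case (Suc j)
  have "fib (m + Suc j * k) mod q = fib ((m + j * k) + k) mod q" by (simp add: algebra_simps)
  also have "\<dots> = fib (m + j * k) mod q" using assms by blast
  finally show ?case using Suc by simp
qed simp

lemma pisano_dvd:
  assumes "k > 0" "\<forall>m. fib (m + k) mod q = fib m mod q"
  shows "pisano q dvd k"
proof -
  let ?P = "pisano q"
  have P: "0 < ?P \<and> (\<forall>m. fib (m + ?P) mod q = fib m mod q)"
    unfolding pisano_def by (rule LeastI[of _ k]) (use assms in auto)
  have per: "fib (m + k mod ?P) mod q = fib m mod q" for m
  proof -
    have "fib (m + k mod ?P) mod q = fib (m + k mod ?P + (k div ?P) * ?P) mod q"
      using period_mult[of ?P q "m + k mod ?P" "k div ?P"] P by simp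
    also have "m + k mod ?P + (k div ?P) * ?P = m + k" by simp
    also have "fib (m + k) mod q = fib m mod q" using assms by blast
    finally show ?thesis .
  qed
  show ?thesis
  proof (rule ccontr)
    assume "\<not> ?P dvd k"
    then have "k mod ?P > 0" by (simp add: mod_greater_zero_iff_not_dvd)
    then have "?P \<le> k mod ?P" unfolding pisano_def using per
      by (intro Least_le) (simp add: pisano_def)
    moreover have "k mod ?P < ?P" using P by simp
    ultimately show False by simp
  qed
qed



lemma five_qr:
  assumes q: "prime q" "q > 5" "q mod 5 = 1 \<or> q mod 5 = 4"
  shows "int q dvd (5::int) ^ (q div 2) - 1"
proof -
  have qi: "int q mod 5 = int (q mod 5)" by (simp add: of_nat_mod)
  have q5: "int q mod 5 = 1 \<or> int q mod 5 = 4" using q(3) qi by auto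
  have nz: "\<not> [int q = 0] (mod 5)" using q5 by (auto simp: cong_def)
  have "QuadRes 5 (int q)"
  proof (cases "q mod 5 = 1")
    case True
    then have "[1 ^ 2 = int q] (mod 5)" using qi by (simp add: cong_def)
    then show ?thesis unfolding QuadRes_def by blast
  next
    case False
    then have "q mod 5 = 4" using q(3) by simp
    then have "[2 ^ 2 = int q] (mod 5)" using qi by (simp add: cong_def)
    then show ?thesis unfolding QuadRes_def by blast
  qed
  then have L1: "Legendre (int q) 5 = 1" using nz unfolding Legendre_def by simp
  have p5: "prime (5::nat)"
  proof -
    have "{2..<5::nat} = {2,3,4}" by auto
    then show ?thesis by (simp add: prime_nat_iff')
  qed
  have "Legendre (int 5) (int q) * Legendre (int q) (int 5) = (-1::int) ^ ((5 - 1) div 2 * ((q - 1) div 2))"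
    using Quadratic_Reciprocity[of 5 q] q p5 by (simp only: numeral_less_iff) auto
  also have "\<dots> = 1" by (simp add: power_mult)
  finally have L: "Legendre 5 (int q) = 1" using L1 by simp
  have "[Legendre 5 (int q) = 5 ^ ((q - 1) div 2)] (mod int q)"
    using euler_criterion[of q 5] q by simp
  moreover have "(q - 1) div 2 = q div 2"
  proof -
    have "odd q" using q prime_odd_nat[of q] by simp
    then show ?thesis by presburger
  qed
  ultimately have "[1 = (5::int) ^ (q div 2)] (mod int q)" using L by simp
  then show ?thesis by (simp add: cong_iff_dvd_diff dvd_diff_commute)
qed



theorem theorem7p1:
  fixes q :: nat
  assumes "prime q" and "prime (2 * q + 1)" and "q > 5"
    and "fib_rank (2 * q + 1) dvd pisano q"
  shows "[q = 8] (mod 15)"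
proof -
  define p where "p = 2 * q + 1"
  have pp: "prime p" "p > 5" using assms unfolding p_def by auto
  have q3: "q mod 3 = 2"
  proof -
    have "q mod 3 \<noteq> 0"
    proof
      assume "q mod 3 = 0"
      then have "3 dvd q" by presburger
      then have "(3::nat) = 1 \<or> 3 = q" using assms(1) unfolding prime_nat_iff by blast
      then have "3 = q" by simp
      then show False using assms by simp
    qed
    moreover have "q mod 3 \<noteq> 1"
    proof
      assume "q mod 3 = 1"
      then have "3 dvd p" unfolding p_def by presburger
      then have "(3::nat) = 1 \<or> 3 = p" using pp(1) unfolding prime_nat_iff by blast
      then have "3 = p" by simp
      then show False using pp by simp
    qed
    ultimately show ?thesis by presburger
  qed
  have q5: "q mod 5 = 3"
  proof (rule ccontr)
    assume ne: "q mod 5 \<noteq> 3"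
    have "q mod 5 \<noteq> 0"
    proof
      assume "q mod 5 = 0"
      then have "5 dvd q" by presburger
      then have "(5::nat) = 1 \<or> 5 = q" using assms(1) unfolding prime_nat_iff by blast
      then have "5 = q" by simp
      then show False using assms by simp
    qed
    moreover have "q mod 5 \<noteq> 2"
    proof
      assume "q mod 5 = 2"
      then have "5 dvd p" unfolding p_def by presburger
      then have "(5::nat) = 1 \<or> 5 = p" using pp(1) unfolding prime_nat_iff by blast
      then have "5 = p" by simp
      then show False using pp by simp
    qed
    ultimately have q14: "q mod 5 = 1 \<or> q mod 5 = 4" using ne by presburger
    define eq where "eq = (5::int) ^ (q div 2)"
    have e1: "int q dvd eq - 1" using five_qr[OF assms(1) assms(3) q14] unfolding eq_def .
    have oddq: "odd q" using assms prime_odd_nat[of q] by simp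
    have A: "int q dvd int (fib q) - eq" "int q dvd 2 * int (fib (q + 1)) - 1 - eq"
      using fib_mod_p[OF assms(1) assms(3)] unfolding eq_def by auto
    have Fq: "int q dvd int (fib q) - 1"
      using dvd_add[OF A(1) e1] by simp
    have "int q dvd 2 * (int (fib (q + 1)) - 1)"
      using dvd_add[OF A(2) e1] by (simp add: algebra_simps)
    then have Fq1: "int q dvd int (fib (q + 1)) - 1"
      using prime_dvd_2mult assms(1) oddq by blast
    have fsum: "fib (q + 1) = fib q + fib (q - 1)"
      using assms(3) fib.simps(3)[of "q - 1"] by (cases q) (auto simp: add.commute)
    have "int q dvd int (fib (q - 1))"
      using dvd_diff[OF Fq1 Fq] fsum by simp
    then have F0: "fib (q - 1) mod q = 0" by (simp add: int_dvd_int_iff)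
    have F1: "fib q mod q = 1"
    proof -
      have "[int (fib q) = 1] (mod int q)" using Fq by (simp add: cong_iff_dvd_diff)
      then have "[fib q = 1] (mod q)" using cong_int_iff[of "fib q" 1 q] by simp
      then show ?thesis using assms by (simp add: cong_def)
    qed
    have per: "\<forall>m. fib (m + (q - 1)) mod q = fib m mod q"
    proof
      fix m show "fib (m + (q - 1)) mod q = fib m mod q"
      proof (cases m)
        case 0 then show ?thesis using F0 by simp
      next
        case (Suc n)
        have "fib (m + (q - 1)) = fib (Suc (n + (q - 1)))" using Suc by simp
        also have "\<dots> = fib (Suc (q - 1)) * fib (Suc n) + fib (q - 1) * fib n" by (rule fib_add)
        also have "Suc (q - 1) = q" using assms by simp
        finally have "fib (m + (q - 1)) mod q = (fib q * fib (Suc n) + fib (q - 1) * fib n) mod q" by simp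
        also have "\<dots> = fib (Suc n) mod q" 
        proof -
          obtain k where k: "fib (q - 1) = q * k" using F0 by (auto elim!: dvdE simp: mod_eq_0_iff_dvd)
          have a: "(fib q * fib (Suc n)) mod q = fib (Suc n) mod q"
            using mod_mult_left_eq[of "fib q" q "fib (Suc n)"] F1 by simp
          have "(fib q * fib (Suc n) + fib (q - 1) * fib n) mod q = (fib q * fib (Suc n) + q * (k * fib n)) mod q"
            using k by (simp add: mult.assoc)
          also have "\<dots> = (fib q * fib (Suc n)) mod q" by simp
          finally show ?thesis using a by simp
        qed
        finally show ?thesis using Suc by simp
      qed
    qed
    have "pisano q dvd q - 1" using pisano_dvd[OF _ per] assms by simp
    then have zq: "fib_rank p dvd q - 1" using assms(4) unfolding p_def by (metis dvd_trans)
    define ep where "ep = (5::int) ^ (p div 2)"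
    have B: "int p dvd int (fib p) - ep" "int p dvd 2 * int (fib (p + 1)) - 1 - ep" "int p dvd ep * ep - 1"
      using fib_mod_p[OF pp] unfolding ep_def by auto
    have oddp: "odd p" unfolding p_def by simp
    have "ep * ep - 1 = (ep - 1) * (ep + 1)" by (simp add: algebra_simps)
    then have "int p dvd (ep - 1) * (ep + 1)" using B(3) by simp
    moreover have "prime (int p)" using pp(1) by simp
    ultimately have this_disj: "int p dvd ep - 1 \<or> int p dvd ep + 1"
      by (simp add: prime_dvd_mult_iff)
    define z where "z = fib_rank p"
    have "2 * q - 2 = 2 * (q - 1)" by simp
    then have zq2: "z dvd 2 * q - 2" using zq unfolding z_def by simp
    from this_disj have "z dvd 4 \<and> z > 0 \<and> p dvd fib z"
    proof
      assume h: "int p dvd ep - 1"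
      have "int p dvd int (fib p) - 1" using dvd_add[OF B(1) h] by simp
      moreover have "int p dvd 2 * (int (fib (p + 1)) - 1)"
        using dvd_add[OF B(2) h] by (simp add: algebra_simps)
      then have "int p dvd int (fib (p + 1)) - 1"
        using prime_dvd_2mult pp(1) oddp by blast
      moreover have "fib (p + 1) = fib p + fib (p - 1)"
        using pp fib.simps(3)[of "p - 1"] by (cases p) (auto simp: add.commute)
      ultimately have "int p dvd int (fib (p + 1)) - 1 - (int (fib p) - 1)" by (blast intro: dvd_diff)
      then have "int p dvd int (fib (p - 1))" using \<open>fib (p + 1) = fib p + fib (p - 1)\<close> by simp
      then have "p dvd fib (p - 1)" by (simp only: int_dvd_int_iff)
      moreover have "p - 1 = 2 * q" unfolding p_def by simp
      ultimately have d: "p dvd fib (2 * q)" by simp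
      have q0: "2 * q > 0" using assms by simp
      have z: "z > 0" "p dvd fib z" using fib_rank_props[OF pp(1) q0 d] unfolding z_def by auto
      have "z dvd 2 * q" using fib_rank_dvd[OF pp(1) q0 d d] unfolding z_def .
      then have "z dvd 2 * q - (2 * q - 2)" using zq2 by (rule dvd_diff_nat)
      moreover have "2 * q - (2 * q - 2) = 2" using assms by simp
      ultimately have "z dvd 2" by simp
      then have "z dvd 4" by (rule dvd_trans) simp
      then show ?thesis using z by simp
    next
      assume h: "int p dvd ep + 1"
      have "int p dvd 2 * int (fib (p + 1))" using dvd_add[OF B(2) h] by simp
      then have "int p dvd int (fib (p + 1))"
        using prime_dvd_2mult pp(1) oddp by blast
      then have "p dvd fib (p + 1)" by (simp only: int_dvd_int_iff)
      moreover have "p + 1 = 2 * q + 2" unfolding p_def by simp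
      ultimately have d: "p dvd fib (2 * q + 2)" by simp
      have q0: "2 * q + 2 > 0" by simp
      have z: "z > 0" "p dvd fib z" using fib_rank_props[OF pp(1) q0 d] unfolding z_def by auto
      have "z dvd 2 * q + 2" using fib_rank_dvd[OF pp(1) q0 d d] unfolding z_def .
      then have "z dvd (2 * q + 2) - (2 * q - 2)" using zq2 by (rule dvd_diff_nat)
      moreover have "(2 * q + 2) - (2 * q - 2) = 4" using assms by simp
      ultimately have "z dvd 4" by simp
      then show ?thesis using z by simp
    qed
    then have z4: "z dvd 4" "z > 0" "p dvd fib z" by auto
    have "z \<le> 4" using z4 by (simp add: dvd_imp_le)
    moreover have "z \<noteq> 3" using z4 by auto
    ultimately have "z = 1 \<or> z = 2 \<or> z = 4" using z4 by auto
    moreover have "fib 4 = 3" by (simp add: numeral_eq_Suc)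
    ultimately have "p dvd 1 \<or> p dvd 3" using z4 by auto
    then have "p \<le> 3" by (auto dest: dvd_imp_le)
    then show False using pp by simp
  qed
  show ?thesis using q3 q5 unfolding cong_def by presburger
qed

end
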